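(* For $n\ge3$, $\mathfrak a_{16}(n)=\{g\in\mathfrak{su}(2^n): g^T=-g\}=\mathfrak{so}(2^n)$.
   Context: Pauli matrices $I,X,Y,Z$; $A_jB_{j+1}$ denotes the length-$n$ Pauli string with $A$ at position $j$, $B$ at $j+1$, $I$ elsewhere. $\mathfrak{su}(N)$ is the Lie algebra of traceless skew-Hermitian matrices and $\mathfrak{so}(N)$ the real skew-symmetric ones. For a set $S$ of Pauli strings, $\mathrm{Lie}\langle S\rangle$ is the smallest real Lie subalgebra of $\mathfrak u(2^n)$ containing $\{iP:P\in S\}$. $\mathfrak a_{16}(n)=\mathrm{Lie}\langle X_jY_{j+1},Y_jX_{j+1},Y_jZ_{j+1},Z_jY_{j+1}:1\le j\le n-1\rangle$. *)

theory Defs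
  imports Complex_Main "Jordan_Normal_Form.Matrix"
begin

datatype pauli = PI | PX | PY | PZ

fun pauli_entry :: "pauli \<Rightarrow> nat \<Rightarrow> nat \<Rightarrow> complex" where
  "pauli_entry PI a b = (if a = b then 1 else 0)"
| "pauli_entry PX a b = (if a \<noteq> b then 1 else 0)"
| "pauli_entry PY a b = (if a = b then 0 else if a = 0 then - \<i> else \<i>)"
| "pauli_entry PZ a b = (if a \<noteq> b then 0 else if a = 0 then 1 else -1)"

definition bitof :: "nat \<Rightarrow> nat \<Rightarrow> nat" where
  "bitof r k = (r div 2 ^ k) mod 2"

(* Pauli string P_1 \<otimes> ... \<otimes> P_n (positions 1..n, position 1 = most significant
   tensor factor) as a 2^n x 2^n complex matrix *)
definition pauli_string :: "nat \<Rightarrow> (nat \<Rightarrow> pauli) \<Rightarrow> complex mat" where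
  "pauli_string n P = mat (2 ^ n) (2 ^ n)
     (\<lambda>(r, c). \<Prod>j\<in>{1..n}. pauli_entry (P j) (bitof r (n - j)) (bitof c (n - j)))"

definition two_site :: "nat \<Rightarrow> nat \<Rightarrow> pauli \<Rightarrow> pauli \<Rightarrow> complex mat" where
  "two_site n j A B = pauli_string n (\<lambda>k. if k = j then A else if k = j + 1 then B else PI)"

definition commutator :: "complex mat \<Rightarrow> complex mat \<Rightarrow> complex mat" where
  "commutator A B = A * B - B * A"

definition mtrace :: "complex mat \<Rightarrow> complex" where
  "mtrace A = (\<Sum>i<dim_row A. A $$ (i, i))"

definition u_alg :: "nat \<Rightarrow> complex mat set" where
  "u_alg N = {g \<in> carrier_mat N N. \<forall>i<N. \<forall>j<N. g $$ (i, j) = - cnj (g $$ (j, i))}"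

definition su_alg :: "nat \<Rightarrow> complex mat set" where
  "su_alg N = {g \<in> u_alg N. mtrace g = 0}"

definition so_alg :: "nat \<Rightarrow> complex mat set" where
  "so_alg N = {g \<in> carrier_mat N N. (\<forall>i<N. \<forall>j<N. g $$ (i, j) \<in> \<real>) \<and> transpose_mat g = - g}"

definition real_lie_subalgebra :: "nat \<Rightarrow> complex mat set \<Rightarrow> bool" where
  "real_lie_subalgebra N L \<longleftrightarrow> L \<subseteq> u_alg N \<and> 0\<^sub>m N N \<in> L
     \<and> (\<forall>A\<in>L. \<forall>B\<in>L. A + B \<in> L)
     \<and> (\<forall>A\<in>L. \<forall>c::real. of_real c \<cdot>\<^sub>m A \<in> L)
     \<and> (\<forall>A\<in>L. \<forall>B\<in>L. commutator A B \<in> L)"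

definition lie_gen :: "nat \<Rightarrow> complex mat set \<Rightarrow> complex mat set" where
  "lie_gen N S = \<Inter>{L. real_lie_subalgebra N L \<and> (\<forall>P\<in>S. \<i> \<cdot>\<^sub>m P \<in> L)}"

definition a16 :: "nat \<Rightarrow> complex mat set" where
  "a16 n = lie_gen (2 ^ n)
     (\<Union>j\<in>{1..n-1}. {two_site n j PX PY, two_site n j PY PX,
                       two_site n j PY PZ, two_site n j PZ PY})"

end

theory Submission
  imports Defs
begin

lemma bitof_lt2: "bitof k i < 2" by (simp add: bitof_def)

lemma bitof_high: "(m::nat) < 2^n \<Longrightarrow> bitof m n = 0"
  by (simp add: bitof_def)

lemma bitof_shift_low:
  assumes "i < n" shows "bitof (m + 2^n) i = bitof m i"
proof -
  obtain d where d: "n - i = Suc d" using assms by (cases "n - i") auto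
  have e: "(2::nat)^n = (2 * 2^d) * 2^i" using assms d
    by (metis le_add_diff_inverse2 less_imp_le_nat power_Suc power_add)
  have "(m + 2^n) div 2^i = m div 2^i + 2 * 2^d" unfolding e by simp
  then show ?thesis unfolding bitof_def by simp
qed

lemma bitof_shift_high:
  assumes "(m::nat) < 2^n" shows "bitof (m + 2^n) n = 1"
  using assms unfolding bitof_def by simp

lemma tensor_sum:
  fixes g :: "nat \<Rightarrow> nat \<Rightarrow> 'a::comm_semiring_1"
  shows "(\<Sum>k<2^n. \<Prod>i<n. g i (bitof k i)) = (\<Prod>i<n. g i 0 + g i 1)"
proof (induction n)
  case 0 then show ?case by simp
next
  case (Suc n)
  let ?M = "(2::nat)^n"
  let ?f = "\<lambda>k. \<Prod>i<Suc n. g i (bitof k i)"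
  have split: "{..<2^Suc n} = {..<?M} \<union> {?M..<?M+?M}" by auto
  have "sum ?f {..<2^Suc n} = sum ?f {..<?M} + sum ?f {?M..<?M+?M}"
    unfolding split by (rule sum.union_disjoint) auto
  also have "sum ?f {?M..<?M+?M} = (\<Sum>k<?M. ?f (k + ?M))"
    using sum.shift_bounds_nat_ivl[of ?f 0 ?M ?M]
    by (simp add: lessThan_atLeast0)
  also have "(\<Sum>k<?M. ?f (k + ?M)) = (\<Sum>k<?M. g n 1 * (\<Prod>i<n. g i (bitof k i)))"
  proof (rule sum.cong[OF refl])
    fix k assume k: "k \<in> {..<?M}"
    have "?f (k + ?M) = g n (bitof (k + ?M) n) * (\<Prod>i<n. g i (bitof (k + ?M) i))"
      by (simp add: mult.commute)
    also have "\<dots> = g n 1 * (\<Prod>i<n. g i (bitof k i))"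
      using k by (simp add: bitof_shift_high bitof_shift_low)
    finally show "?f (k + ?M) = g n 1 * (\<Prod>i<n. g i (bitof k i))" .
  qed
  also have "sum ?f {..<?M} = (\<Sum>k<?M. g n 0 * (\<Prod>i<n. g i (bitof k i)))"
  proof (rule sum.cong[OF refl])
    fix k assume k: "k \<in> {..<?M}"
    show "?f k = g n 0 * (\<Prod>i<n. g i (bitof k i))"
      using k by (simp add: bitof_high mult.commute)
  qed
  finally show ?case using Suc by (simp add: sum_distrib_left[symmetric] algebra_simps)
qed

fun pmul :: "pauli \<Rightarrow> pauli \<Rightarrow> pauli" where
  "pmul PI q = q"
| "pmul PX PI = PX" | "pmul PX PX = PI" | "pmul PX PY = PZ" | "pmul PX PZ = PY"
| "pmul PY PI = PY" | "pmul PY PX = PZ" | "pmul PY PY = PI" | "pmul PY PZ = PX"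
| "pmul PZ PI = PZ" | "pmul PZ PX = PY" | "pmul PZ PY = PX" | "pmul PZ PZ = PI"

fun ph :: "pauli \<Rightarrow> pauli \<Rightarrow> complex" where
  "ph PX PY = \<i>" | "ph PY PX = - \<i>"
| "ph PY PZ = \<i>" | "ph PZ PY = - \<i>"
| "ph PZ PX = \<i>" | "ph PX PZ = - \<i>"
| "ph _ _ = 1"

lemma lt2_cases: "(a::nat) < 2 \<Longrightarrow> a = 0 \<or> a = 1" by auto

lemma single_mult:
  assumes "a < 2" "b < 2"
  shows "(\<Sum>x<2. pauli_entry p a x * pauli_entry q x b) = ph p q * pauli_entry (pmul p q) a b"
  using lt2_cases[OF assms(1)] lt2_cases[OF assms(2)]
  by (cases p; cases q) (auto simp: numeral_2_eq_2)

lemma prod_rev_index: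
  "(\<Prod>j\<in>{1..(n::nat)}. h j) = (\<Prod>i<n. h (n - i))"
  by (rule prod.reindex_bij_witness[where i="\<lambda>j. n - j" and j="\<lambda>i. n - i"]) (auto simp: diff_diff_cancel)

lemma pstr_entry:
  assumes "r < 2^n" "c < 2^n"
  shows "pauli_string n P $$ (r, c) = (\<Prod>i<n. pauli_entry (P (n - i)) (bitof r i) (bitof c i))"
proof -
  have "pauli_string n P $$ (r, c) = (\<Prod>j\<in>{1..n}. pauli_entry (P j) (bitof r (n - j)) (bitof c (n - j)))"
    using assms unfolding pauli_string_def by simp
  also have "\<dots> = (\<Prod>i<n. pauli_entry (P (n - i)) (bitof r (n - (n - i))) (bitof c (n - (n - i))))"
    by (rule prod_rev_index)
  also have "\<dots> = (\<Prod>i<n. pauli_entry (P (n - i)) (bitof r i) (bitof c i))"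
    by (rule prod.cong) auto
  finally show ?thesis .
qed

lemma pstr_carrier[simp]: "pauli_string n P \<in> carrier_mat (2^n) (2^n)"
  and pstr_dim[simp]: "dim_row (pauli_string n P) = 2^n" "dim_col (pauli_string n P) = 2^n"
  unfolding pauli_string_def by auto

definition wmul :: "(nat \<Rightarrow> pauli) \<Rightarrow> (nat \<Rightarrow> pauli) \<Rightarrow> nat \<Rightarrow> pauli" where
  "wmul P Q = (\<lambda>j. pmul (P j) (Q j))"

definition phs :: "nat \<Rightarrow> (nat \<Rightarrow> pauli) \<Rightarrow> (nat \<Rightarrow> pauli) \<Rightarrow> complex" where
  "phs n P Q = (\<Prod>j\<in>{1..n}. ph (P j) (Q j))"

lemma pstr_mult_entry:
  assumes r: "r < 2^n" and c: "c < 2^n"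
  shows "(pauli_string n P * pauli_string n Q) $$ (r, c) = phs n P Q * pauli_string n (wmul P Q) $$ (r, c)"
proof -
  let ?g = "\<lambda>i x. pauli_entry (P (n - i)) (bitof r i) x * pauli_entry (Q (n - i)) x (bitof c i)"
  have "(pauli_string n P * pauli_string n Q) $$ (r, c)
      = (\<Sum>k\<in>{0..<2^n}. pauli_string n P $$ (r, k) * pauli_string n Q $$ (k, c))"
    using r c by (simp add: scalar_prod_def)
  also have "\<dots> = (\<Sum>k<2^n. \<Prod>i<n. ?g i (bitof k i))"
    using r c by (intro sum.cong) (auto simp: pstr_entry prod.distrib)
  also have "\<dots> = (\<Prod>i<n. ?g i 0 + ?g i 1)" by (rule tensor_sum)
  also have "\<dots> = (\<Prod>i<n. ph (P (n - i)) (Q (n - i)) * pauli_entry (pmul (P (n - i)) (Q (n - i))) (bitof r i) (bitof c i))"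
  proof (rule prod.cong[OF refl])
    fix i
    have "?g i 0 + ?g i 1 = (\<Sum>x<2. ?g i x)" by (simp add: numeral_2_eq_2)
    also have "\<dots> = ph (P (n - i)) (Q (n - i)) * pauli_entry (pmul (P (n - i)) (Q (n - i))) (bitof r i) (bitof c i)"
      by (rule single_mult) (simp_all add: bitof_lt2)
    finally show "?g i 0 + ?g i 1 = \<dots>" .
  qed
  also have "\<dots> = (\<Prod>i<n. ph (P (n - i)) (Q (n - i))) * (\<Prod>i<n. pauli_entry (pmul (P (n - i)) (Q (n - i))) (bitof r i) (bitof c i))"
    by (rule prod.distrib)
  also have "\<dots> = phs n P Q * pauli_string n (wmul P Q) $$ (r, c)"
    unfolding phs_def prod_rev_index[of "\<lambda>j. ph (P j) (Q j)"] pstr_entry[OF r c] wmul_def by simp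
  finally show ?thesis .
qed

definition anti :: "pauli \<Rightarrow> pauli \<Rightarrow> bool" where
  "anti p q \<longleftrightarrow> p \<noteq> PI \<and> q \<noteq> PI \<and> p \<noteq> q"

definition asg :: "pauli \<Rightarrow> pauli \<Rightarrow> complex" where
  "asg p q = (if anti p q then -1 else 1)"

definition acomm :: "nat \<Rightarrow> (nat \<Rightarrow> pauli) \<Rightarrow> (nat \<Rightarrow> pauli) \<Rightarrow> bool" where
  "acomm n P Q \<longleftrightarrow> (\<Prod>j\<in>{1..n}. asg (P j) (Q j)) = -1"

lemma ph_swap: "ph q p = asg p q * ph p q"
  by (cases p; cases q) (auto simp: asg_def anti_def)

lemma ph_sq: "ph p q * ph p q = asg p q"
  by (cases p; cases q) (auto simp: asg_def anti_def)

lemma pmul_comm: "pmul p q = pmul q p"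
  by (cases p; cases q) auto

lemma wmul_comm: "wmul P Q = wmul Q P"
  by (auto simp: wmul_def pmul_comm)

lemma phs_swap: "phs n Q P = (\<Prod>j\<in>{1..n}. asg (P j) (Q j)) * phs n P Q"
  unfolding phs_def prod.distrib[symmetric] by (rule prod.cong[OF refl], rule ph_swap)

lemma phs_sq: "phs n P Q * phs n P Q = (\<Prod>j\<in>{1..n}. asg (P j) (Q j))"
  unfolding phs_def by (simp add: ph_sq prod.distrib[symmetric])

lemma sq_minus1: "(c::complex) * c = -1 \<Longrightarrow> c = \<i> \<or> c = - \<i>"
proof -
  assume "c * c = -1"
  hence "(c - \<i>) * (c + \<i>) = 0" by (simp add: algebra_simps)
  hence "c - \<i> = 0 \<or> c + \<i> = 0" by simp
  thus ?thesis by (metis eq_iff_diff_eq_0 neg_eq_iff_add_eq_0 minus_equation_iff)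
qed

lemma smult_mult_entry:
  fixes A B :: "complex mat"
  assumes A: "A \<in> carrier_mat N N" and B: "B \<in> carrier_mat N N" and r: "r < N" and c: "c < N"
  shows "((a \<cdot>\<^sub>m A) * (b \<cdot>\<^sub>m B)) $$ (r, c) = a * b * (A * B) $$ (r, c)"
proof -
  have "((a \<cdot>\<^sub>m A) * (b \<cdot>\<^sub>m B)) $$ (r, c) = (\<Sum>i = 0..<N. (a \<cdot>\<^sub>m A) $$ (r, i) * (b \<cdot>\<^sub>m B) $$ (i, c))"
    using A B r c by (simp add: scalar_prod_def)
  also have "\<dots> = (\<Sum>i = 0..<N. (a * b) * (A $$ (r, i) * B $$ (i, c)))"
    using A B r c by (intro sum.cong refl) (simp add: algebra_simps)
  also have "\<dots> = (a * b) * (\<Sum>i = 0..<N. A $$ (r, i) * B $$ (i, c))"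
    by (simp only: sum_distrib_left)
  also have "\<dots> = a * b * (A * B) $$ (r, c)"
    using A B r c by (simp add: scalar_prod_def)
  finally show ?thesis .
qed

lemma comm_entry:
  assumes r: "r < 2^n" and c: "c < 2^n"
  shows "commutator (\<i> \<cdot>\<^sub>m pauli_string n P) (\<i> \<cdot>\<^sub>m pauli_string n Q) $$ (r, c)
    = - (phs n P Q - phs n Q P) * pauli_string n (wmul P Q) $$ (r, c)"
proof -
  have e1: "((\<i> \<cdot>\<^sub>m pauli_string n P) * (\<i> \<cdot>\<^sub>m pauli_string n Q)) $$ (r, c) = - (phs n P Q * pauli_string n (wmul P Q) $$ (r, c))"
    using smult_mult_entry[OF pstr_carrier pstr_carrier r c, of \<i> P \<i> Q] pstr_mult_entry[OF r c, of P Q]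
    by simp
  have e2: "((\<i> \<cdot>\<^sub>m pauli_string n Q) * (\<i> \<cdot>\<^sub>m pauli_string n P)) $$ (r, c) = - (phs n Q P * pauli_string n (wmul P Q) $$ (r, c))"
    using smult_mult_entry[OF pstr_carrier pstr_carrier r c, of \<i> Q \<i> P] pstr_mult_entry[OF r c, of Q P]
    by (simp add: wmul_comm[of Q P])
  have "commutator (\<i> \<cdot>\<^sub>m pauli_string n P) (\<i> \<cdot>\<^sub>m pauli_string n Q) $$ (r, c)
     = ((\<i> \<cdot>\<^sub>m pauli_string n P) * (\<i> \<cdot>\<^sub>m pauli_string n Q)) $$ (r, c) - ((\<i> \<cdot>\<^sub>m pauli_string n Q) * (\<i> \<cdot>\<^sub>m pauli_string n P)) $$ (r, c)"
    unfolding commutator_def using r c by (simp only: index_minus_mat index_mult_mat index_smult_mat pstr_dim)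
  also have "\<dots> = - (phs n P Q - phs n Q P) * pauli_string n (wmul P Q) $$ (r, c)"
    unfolding e1 e2 by (simp add: algebra_simps)
  finally show ?thesis .
qed

lemma rls_comm: "real_lie_subalgebra N L \<Longrightarrow> A \<in> L \<Longrightarrow> B \<in> L \<Longrightarrow> commutator A B \<in> L"
  unfolding real_lie_subalgebra_def by simp
lemma rls_smult: "real_lie_subalgebra N L \<Longrightarrow> A \<in> L \<Longrightarrow> of_real c \<cdot>\<^sub>m A \<in> L"
  unfolding real_lie_subalgebra_def by simp
lemma rls_add: "real_lie_subalgebra N L \<Longrightarrow> A \<in> L \<Longrightarrow> B \<in> L \<Longrightarrow> A + B \<in> L"
  unfolding real_lie_subalgebra_def by simp
lemma rls_zero: "real_lie_subalgebra N L \<Longrightarrow> 0\<^sub>m N N \<in> L"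
  unfolding real_lie_subalgebra_def by simp
lemma rls_sub: "real_lie_subalgebra N L \<Longrightarrow> L \<subseteq> u_alg N"
  unfolding real_lie_subalgebra_def by simp

lemma lie_closed:
  assumes L: "real_lie_subalgebra (2^n) L"
    and P: "\<i> \<cdot>\<^sub>m pauli_string n P \<in> L" and Q: "\<i> \<cdot>\<^sub>m pauli_string n Q \<in> L"
    and ac: "acomm n P Q"
  shows "\<i> \<cdot>\<^sub>m pauli_string n (wmul P Q) \<in> L"
proof -
  let ?c = "phs n P Q"
  have sw: "phs n Q P = - ?c" using ac phs_swap[of n Q P] by (simp add: acomm_def)
  have sq: "?c * ?c = -1" using ac phs_sq[of n P Q] by (simp add: acomm_def)
  obtain t :: real where t: "\<i> = of_real t * (- 2 * ?c)"
  proof (cases "?c = \<i>")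
    case True thus ?thesis using that[of "-1/2"] by simp
  next
    case False hence "?c = - \<i>" using sq_minus1[OF sq] by auto
    thus ?thesis using that[of "1/2"] by simp
  qed
  have cm: "commutator (\<i> \<cdot>\<^sub>m pauli_string n P) (\<i> \<cdot>\<^sub>m pauli_string n Q) \<in> L"
    using L P Q by (rule rls_comm)
  hence "of_real t \<cdot>\<^sub>m commutator (\<i> \<cdot>\<^sub>m pauli_string n P) (\<i> \<cdot>\<^sub>m pauli_string n Q) \<in> L"
    using L by (intro rls_smult)
  moreover have "of_real t \<cdot>\<^sub>m commutator (\<i> \<cdot>\<^sub>m pauli_string n P) (\<i> \<cdot>\<^sub>m pauli_string n Q)
      = \<i> \<cdot>\<^sub>m pauli_string n (wmul P Q)"
  proof (rule eq_matI)
    fix r c assume "r < dim_row (\<i> \<cdot>\<^sub>m pauli_string n (wmul P Q))" "c < dim_col (\<i> \<cdot>\<^sub>m pauli_string n (wmul P Q))"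
    hence r: "r < 2^n" and c: "c < 2^n" by auto
    have "(of_real t \<cdot>\<^sub>m commutator (\<i> \<cdot>\<^sub>m pauli_string n P) (\<i> \<cdot>\<^sub>m pauli_string n Q)) $$ (r, c)
        = of_real t * commutator (\<i> \<cdot>\<^sub>m pauli_string n P) (\<i> \<cdot>\<^sub>m pauli_string n Q) $$ (r, c)"
      using r c by (simp add: commutator_def)
    also have "\<dots> = of_real t * (- (?c - (- ?c)) * pauli_string n (wmul P Q) $$ (r, c))"
      by (simp only: comm_entry[OF r c] sw)
    also have "\<dots> = (of_real t * (- 2 * ?c)) * pauli_string n (wmul P Q) $$ (r, c)"
      by (simp add: algebra_simps)
    also have "\<dots> = (\<i> \<cdot>\<^sub>m pauli_string n (wmul P Q)) $$ (r, c)"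
      using r c by (simp only: t[symmetric] index_smult_mat pstr_dim)
    finally show "(of_real t \<cdot>\<^sub>m commutator (\<i> \<cdot>\<^sub>m pauli_string n P) (\<i> \<cdot>\<^sub>m pauli_string n Q)) $$ (r, c)
      = (\<i> \<cdot>\<^sub>m pauli_string n (wmul P Q)) $$ (r, c)" .
  qed (simp_all add: commutator_def)
  ultimately show ?thesis by simp
qed

definition tw :: "nat \<Rightarrow> pauli \<Rightarrow> pauli \<Rightarrow> nat \<Rightarrow> pauli" where
  "tw j a b = (\<lambda>k. if k = j then a else if k = j + 1 then b else PI)"

definition sY :: "nat \<Rightarrow> nat \<Rightarrow> pauli" where
  "sY j = (\<lambda>k. if k = j then PY else PI)"

definition inC :: "nat \<Rightarrow> complex mat set \<Rightarrow> (nat \<Rightarrow> pauli) \<Rightarrow> bool" where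
  "inC n L w \<longleftrightarrow> \<i> \<cdot>\<^sub>m pauli_string n w \<in> L"

lemma asg_PI[simp]: "asg PI x = 1" by (simp add: asg_def anti_def)

lemma prod_two:
  fixes n :: nat
  assumes "1 \<le> k" "k < n" and "\<And>j. j \<noteq> k \<Longrightarrow> j \<noteq> k + 1 \<Longrightarrow> f j = 1"
  shows "(\<Prod>j\<in>{1..n}. f j) = f k * (f (k + 1) :: 'a::comm_monoid_mult)"
proof -
  have "(\<Prod>j\<in>{1..n}. f j) = (\<Prod>j\<in>{k, k+1}. f j)"
    by (rule prod.mono_neutral_right) (use assms in auto)
  thus ?thesis by simp
qed

lemma prod_one:
  fixes n :: nat
  assumes "1 \<le> k" "k \<le> n" and "\<And>j. j \<noteq> k \<Longrightarrow> f j = 1"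
  shows "(\<Prod>j\<in>{1..n}. f j) = (f k :: 'a::comm_monoid_mult)"
proof -
  have "(\<Prod>j\<in>{1..n}. f j) = (\<Prod>j\<in>{k}. f j)"
    by (rule prod.mono_neutral_right) (use assms in auto)
  thus ?thesis by simp
qed

lemma acomm_tw:
  assumes "1 \<le> k" "k < n"
  shows "acomm n (tw k a b) w \<longleftrightarrow> asg a (w k) * asg b (w (k + 1)) = -1"
  unfolding acomm_def
  by (subst prod_two[OF assms]) (auto simp: tw_def)

lemma pmul_PI2[simp]: "pmul p PI = p" by (cases p) auto

lemma wmul_tw_app: "wmul (tw k a b) w x = (if x = k then pmul a (w k) else if x = k + 1 then pmul b (w (k + 1)) else w x)"
  unfolding wmul_def tw_def by simp

lemma upd2_app: "(w(k := c, k + 1 := d)) x = (if x = k + 1 then d else if x = k then c else w x)"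
  by simp

lemma upd_upd2: "(w(k := a, k + 1 := b))(k := c, k + 1 := d) = w(k := c, k + 1 := d)"
  by (rule ext) (simp only: upd2_app, auto)

lemma upd_self2: "w(k := w k, k + 1 := w (k + 1)) = w"
  by (rule ext) (simp only: upd2_app, auto)

lemma wmul_tw: "wmul (tw k a b) w = w(k := pmul a (w k), k + 1 := pmul b (w (k + 1)))"
  by (rule ext) (simp only: wmul_tw_app upd2_app, auto)

lemma acomm_sY:
  assumes "1 \<le> k" "k \<le> n"
  shows "acomm n (sY k) w \<longleftrightarrow> asg PY (w k) = -1"
  unfolding acomm_def
  by (subst prod_one[OF assms]) (auto simp: sY_def)

lemma wmul_sY: "wmul (sY k) w = w(k := pmul PY (w k))"
  by (auto simp: wmul_def sY_def)

lemma wmul_tw_tw: "wmul (tw k a b) (tw k c d) = tw k (pmul a c) (pmul b d)"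
  by (auto simp: wmul_def tw_def)

lemma tw_sY1: "tw k PY PI = sY k" by (auto simp: tw_def sY_def)
lemma tw_sY2: "tw k PI PY = sY (k + 1)" by (auto simp: tw_def sY_def)



fun pat :: "pauli \<Rightarrow> nat" where
  "pat PI = 0" | "pat PY = 1" | "pat PX = 2" | "pat PZ = 2"

fun can :: "nat \<Rightarrow> pauli" where
  "can 0 = PI" | "can (Suc 0) = PY" | "can _ = PX"

lemma pat_can: "pat (can (pat p)) = pat p" by (cases p) (auto simp: numeral_2_eq_2)

definition yf :: "pauli \<Rightarrow> int" where "yf p = (if p = PY then -1 else 1)"

definition ysg :: "nat \<Rightarrow> (nat \<Rightarrow> pauli) \<Rightarrow> int" where
  "ysg n w = (\<Prod>j\<in>{1..n}. yf (w j))"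

lemma yf_pat: "pat p = pat q \<Longrightarrow> yf p = yf q"
  by (cases p; cases q) (auto simp: yf_def)

lemma ysg_pair:
  assumes k: "1 \<le> k" "k < n" and e: "yf a * yf b = yf (w k) * yf (w (k + 1))"
  shows "ysg n (w(k := a, k + 1 := b)) = ysg n w"
proof -
  let ?B = "{k, k + 1}"
  have B: "?B \<subseteq> {1..n}" using k by auto
  have "ysg n (w(k := a, k + 1 := b)) = (\<Prod>j\<in>{1..n} - ?B. yf ((w(k := a, k + 1 := b)) j)) * (\<Prod>j\<in>?B. yf ((w(k := a, k + 1 := b)) j))"
    unfolding ysg_def by (rule prod.subset_diff[OF B]) simp
  also have "(\<Prod>j\<in>{1..n} - ?B. yf ((w(k := a, k + 1 := b)) j)) = (\<Prod>j\<in>{1..n} - ?B. yf (w j))"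
    by (rule prod.cong) auto
  also have "(\<Prod>j\<in>?B. yf ((w(k := a, k + 1 := b)) j)) = yf a * yf b" by simp
  also have "\<dots> = (\<Prod>j\<in>?B. yf (w j))" using e by simp
  also have "(\<Prod>j\<in>{1..n} - ?B. yf (w j)) * (\<Prod>j\<in>?B. yf (w j)) = ysg n w"
    unfolding ysg_def by (rule prod.subset_diff[OF B, symmetric]) simp
  finally show ?thesis .
qed

lemma pstr_cong: "(\<And>j. 1 \<le> j \<Longrightarrow> j \<le> n \<Longrightarrow> w j = w' j) \<Longrightarrow> pauli_string n w = pauli_string n w'"
  unfolding pauli_string_def by (intro arg_cong[where f="mat _ _"] ext) (auto intro!: prod.cong)

lemma inC_cong: "(\<And>j. 1 \<le> j \<Longrightarrow> j \<le> n \<Longrightarrow> w j = w' j) \<Longrightarrow> inC n L w \<longleftrightarrow> inC n L w'"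
  unfolding inC_def using pstr_cong[of n w w'] by simp

definition MV :: "(nat \<times> nat \<times> nat \<times> nat) set" where
  "MV = {(0,1,1,2),(1,2,0,1),(1,0,2,1),(0,2,1,1),(1,1,0,2),(1,1,2,0),(2,0,1,1),(0,2,2,2)}"

definition mvg :: "nat \<times> nat \<times> nat \<times> nat \<Rightarrow> pauli \<times> pauli" where
  "mvg x = (if x = (0,1,1,2) then (PY,PX) else if x = (1,2,0,1) then (PY,PZ)
     else if x = (1,0,2,1) then (PX,PY) else if x = (0,2,1,1) then (PY,PZ)
     else if x = (1,1,0,2) then (PY,PX) else if x = (1,1,2,0) then (PX,PY)
     else (PZ,PY))"

lemma mvg_ok:
  assumes "(s1, s2, t1, t2) \<in> MV"
  shows "fst (mvg (s1, s2, t1, t2)) = g1 \<Longrightarrow> snd (mvg (s1, s2, t1, t2)) = g2 \<Longrightarrow>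
    (g1, g2) \<in> {(PX,PY),(PY,PX),(PY,PZ),(PZ,PY)} \<and> asg g1 (can s1) * asg g2 (can s2) = -1
    \<and> pat (pmul g1 (can s1)) = t1 \<and> pat (pmul g2 (can s2)) = t2"
  using assms unfolding MV_def
  by (elim insertE emptyE; simp add: mvg_def asg_def anti_def numeral_2_eq_2)

lemma ysg_single:
  assumes k: "1 \<le> k" "k \<le> n" and w: "\<And>j. 1 \<le> j \<Longrightarrow> j \<le> n \<Longrightarrow> j \<noteq> k \<Longrightarrow> w j = PI"
  shows "ysg n w = yf (w k)"
proof -
  have "ysg n w = (\<Prod>j\<in>{k}. yf (w j))"
    unfolding ysg_def by (rule prod.mono_neutral_right) (use k w in \<open>auto simp: yf_def\<close>)
  thus ?thesis by simp
qed

lemma ysg_allI: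
  assumes w: "\<And>j. 1 \<le> j \<Longrightarrow> j \<le> n \<Longrightarrow> w j = PI"
  shows "ysg n w = 1"
  unfolding ysg_def by (rule prod.neutral) (use w in \<open>auto simp: yf_def\<close>)

context
  fixes n :: nat and L
  assumes L: "real_lie_subalgebra (2^n) L"
    and gens: "\<And>j a b. 1 \<le> j \<Longrightarrow> j < n \<Longrightarrow> (a, b) \<in> {(PX,PY),(PY,PX),(PY,PZ),(PZ,PY)}
                 \<Longrightarrow> \<i> \<cdot>\<^sub>m pauli_string n (tw j a b) \<in> L"
    and n2: "2 \<le> n"
begin

lemma C_mul: "inC n L P \<Longrightarrow> inC n L Q \<Longrightarrow> acomm n P Q \<Longrightarrow> inC n L (wmul P Q)"
  unfolding inC_def using lie_closed[OF L] by blast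

lemma C_tw: "1 \<le> j \<Longrightarrow> j < n \<Longrightarrow> (a, b) \<in> {(PX,PY),(PY,PX),(PY,PZ),(PZ,PY)} \<Longrightarrow> inC n L (tw j a b)"
  unfolding inC_def by (rule gens)

lemma C_sY: assumes "1 \<le> j" "j \<le> n" shows "inC n L (sY j)"
proof (cases "j < n")
  case True
  have k: "1 \<le> j" "j < n" using assms True by auto
  have "inC n L (wmul (tw j PX PY) (tw j PZ PY))"
    by (rule C_mul[OF C_tw[OF k] C_tw[OF k]]) (simp, simp, subst acomm_tw[OF k], simp add: tw_def asg_def anti_def)
  thus ?thesis by (simp add: wmul_tw_tw tw_sY1)
next
  case False
  hence j: "j = (n - 1) + 1" using assms by auto
  have k: "1 \<le> n - 1" "n - 1 < n" using n2 by auto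
  have "inC n L (wmul (tw (n-1) PY PX) (tw (n-1) PY PZ))"
    by (rule C_mul[OF C_tw[OF k] C_tw[OF k]]) (simp, simp, subst acomm_tw[OF k], simp add: tw_def asg_def anti_def)
  thus ?thesis using j by (simp add: wmul_tw_tw tw_sY2)
qed

lemma C_gen:
  assumes w: "inC n L w" and k: "1 \<le> k" "k < n"
    and g: "(a, b) \<in> {(PX,PY),(PY,PX),(PY,PZ),(PZ,PY)}"
    and ac: "asg a (w k) * asg b (w (k + 1)) = -1"
  shows "inC n L (w(k := pmul a (w k), k + 1 := pmul b (w (k + 1))))"
proof -
  have "inC n L (wmul (tw k a b) w)"
    by (rule C_mul[OF C_tw[OF k g] w]) (use ac in \<open>simp add: acomm_tw[OF k]\<close>)
  thus ?thesis by (simp add: wmul_tw)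
qed

lemma C_flip:
  assumes w: "inC n L w" and k: "1 \<le> k" "k \<le> n" and wk: "w k = PX \<or> w k = PZ"
  shows "inC n L (w(k := pmul PY (w k)))"
proof -
  have "inC n L (wmul (sY k) w)"
    by (rule C_mul[OF C_sY[OF k] w]) (use wk in \<open>auto simp: acomm_sY[OF k] asg_def anti_def\<close>)
  thus ?thesis by (simp add: wmul_sY)
qed

lemma C_setpat:
  assumes w: "inC n L w" and k: "1 \<le> k" "k \<le> n" and p: "pat a = pat (w k)"
  shows "inC n L (w(k := a))"
proof (cases "a = w k")
  case True thus ?thesis using w by simp
next
  case False
  hence wk: "w k = PX \<or> w k = PZ" and a: "a = pmul PY (w k)" using p
    by (cases a; cases "w k"; simp)+
  show ?thesis using C_flip[OF w k wk] a by simp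
qed

lemma C_move_gen:
  assumes w: "inC n L w" and k: "1 \<le> k" "k < n"
    and g: "(g1, g2) \<in> {(PX,PY),(PY,PX),(PY,PZ),(PZ,PY)}"
    and s1: "s1 = pat (w k)" and s2: "s2 = pat (w (k + 1))"
    and ac: "asg g1 (can s1) * asg g2 (can s2) = -1"
    and a: "pat a = pat (pmul g1 (can s1))" and b: "pat b = pat (pmul g2 (can s2))"
  shows "inC n L (w(k := a, k + 1 := b))"
proof -
  have k1: "1 \<le> k" "k \<le> n" and k2: "1 \<le> k + 1" "k + 1 \<le> n" using k by auto
  define w0 where "w0 = w(k := can s1, k + 1 := can s2)"
  have "inC n L (w(k := can s1))" using C_setpat[OF w k1] s1 pat_can by simp
  hence w0: "inC n L w0" unfolding w0_def using C_setpat[OF _ k2, of "w(k := can s1)" "can s2"] s2 pat_can by simp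
  have w0k: "w0 k = can s1" "w0 (k + 1) = can s2" unfolding w0_def by simp_all
  have "inC n L (w0(k := pmul g1 (w0 k), k + 1 := pmul g2 (w0 (k + 1))))"
    by (rule C_gen[OF w0 k g]) (unfold w0k, rule ac)
  hence w1: "inC n L (w0(k := pmul g1 (can s1), k + 1 := pmul g2 (can s2)))" unfolding w0k .
  have "inC n L ((w0(k := pmul g1 (can s1), k + 1 := pmul g2 (can s2)))(k := a))"
    by (rule C_setpat[OF w1 k1]) (simp add: a)
  hence "inC n L ((w0(k := pmul g1 (can s1), k + 1 := pmul g2 (can s2)))(k := a, k + 1 := b))"
    by (rule C_setpat[OF _ k2]) (simp add: b)
  moreover have "(w0(k := pmul g1 (can s1), k + 1 := pmul g2 (can s2)))(k := a, k + 1 := b) = w(k := a, k + 1 := b)"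
    unfolding w0_def by (auto simp: fun_eq_iff)
  ultimately show ?thesis by simp
qed

lemma C_mv:
  assumes w: "inC n L w" and k: "1 \<le> k" "k < n"
    and m: "(pat (w k), pat (w (k + 1)), pat a, pat b) \<in> MV"
  shows "inC n L (w(k := a, k + 1 := b))"
proof -
  obtain g1 g2 where g: "mvg (pat (w k), pat (w (k + 1)), pat a, pat b) = (g1, g2)"
    by (cases "mvg (pat (w k), pat (w (k + 1)), pat a, pat b)") auto
  note ok = mvg_ok[OF m, of g1 g2, unfolded g, simplified]
  show ?thesis
    by (rule C_move_gen[OF w k, of g1 g2 "pat (w k)" "pat (w (k + 1))"]) (use ok in auto)
qed

lemma C_single:
  assumes k: "1 \<le> k" "k \<le> n" and w: "\<And>j. 1 \<le> j \<Longrightarrow> j \<le> n \<Longrightarrow> j \<noteq> k \<Longrightarrow> w j = PI"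
    and wk: "w k = PY"
  shows "inC n L w"
proof -
  have "inC n L w \<longleftrightarrow> inC n L (sY k)"
    by (rule inC_cong) (use w wk in \<open>auto simp: sY_def\<close>)
  thus ?thesis using C_sY[OF k] by simp
qed

definition Gk :: "nat \<Rightarrow> bool" where
  "Gk k \<longleftrightarrow> (\<forall>w. ysg n w = -1 \<longrightarrow> (\<forall>j. 1 \<le> j \<longrightarrow> j < k \<longrightarrow> w j = PI) \<longrightarrow> inC n L w)"

lemma GkD:
  assumes "Gk k" "ysg n w = -1" "\<forall>j. 1 \<le> j \<longrightarrow> j < k \<longrightarrow> w j = PI"
  shows "inC n L w"
proof -
  have h: "ysg n w = -1 \<longrightarrow> (\<forall>j. 1 \<le> j \<longrightarrow> j < k \<longrightarrow> w j = PI) \<longrightarrow> inC n L w"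
    using assms(1) unfolding Gk_def by (rule spec)
  show ?thesis using mp[OF mp[OF h assms(2)] assms(3)] .
qed

lemma outerY:
  assumes IH: "Gk (k + 1)" and k: "1 \<le> k" "k < n" and odd: "ysg n w = -1"
    and bef: "\<And>j. 1 \<le> j \<Longrightarrow> j < k \<Longrightarrow> w j = PI" and wk: "w k = PY" and wk1: "w (k + 1) \<noteq> PI"
  shows "inC n L w"
proof (cases "w (k + 1) = PY")
  case True
  let ?w' = "w(k := PI, k + 1 := PX)"
  have "ysg n ?w' = ysg n w" by (rule ysg_pair[OF k]) (use True in \<open>simp add: yf_def wk\<close>)
  moreover have "\<forall>j. 1 \<le> j \<longrightarrow> j < k + 1 \<longrightarrow> ?w' j = PI"
    by (simp only: upd2_app) (use bef in auto)
  ultimately have "inC n L ?w'" using GkD[OF IH] odd by simp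
  hence "inC n L (?w'(k := w k, k + 1 := w (k + 1)))"
    by (rule C_mv[OF _ k]) (use True in \<open>simp add: wk MV_def\<close>)
  thus ?thesis by (simp only: upd_upd2 upd_self2)
next
  case False
  let ?w' = "w(k := PI, k + 1 := PY)"
  have A: "w (k + 1) = PX \<or> w (k + 1) = PZ" using False wk1 by (cases "w (k + 1)") auto
  have "ysg n ?w' = ysg n w" by (rule ysg_pair[OF k]) (use A in \<open>auto simp: yf_def wk\<close>)
  moreover have "\<forall>j. 1 \<le> j \<longrightarrow> j < k + 1 \<longrightarrow> ?w' j = PI"
    by (simp only: upd2_app) (use bef in auto)
  ultimately have "inC n L ?w'" using GkD[OF IH] odd by simp
  hence "inC n L (?w'(k := w k, k + 1 := w (k + 1)))"
    by (rule C_mv[OF _ k]) (use A in \<open>auto simp: wk MV_def\<close>)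
  thus ?thesis by (simp only: upd_upd2 upd_self2)
qed

lemma innerH:
  assumes IH: "Gk (k + 1)" and k: "1 \<le> k"
  shows "ysg n w = -1 \<Longrightarrow> (\<forall>j. 1 \<le> j \<longrightarrow> j < k \<longrightarrow> w j = PI) \<Longrightarrow> w k = PY
    \<Longrightarrow> (\<forall>j. k < j \<longrightarrow> j < k + Suc e \<longrightarrow> w j = PI) \<Longrightarrow> k + Suc e \<le> n \<Longrightarrow> w (k + Suc e) \<noteq> PI
    \<Longrightarrow> inC n L w"
proof (induction e arbitrary: w)
  case 0
  show ?case by (rule outerY[OF IH k]) (use 0 in auto)
next
  case (Suc e)
  define p where "p = k + Suc e"
  have q: "k + Suc (Suc e) = p + 1" unfolding p_def by simp
  have p: "1 \<le> p" "p < n" using Suc.prems(5) k unfolding p_def by auto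
  have wp: "w p = PI" using Suc.prems(4) unfolding p_def by auto
  have wq: "w (p + 1) \<noteq> PI" using Suc.prems(6) q by simp
  show ?case
  proof (cases "w (p + 1) = PY")
    case True
    let ?w' = "w(p := PY, p + 1 := PX)"
    have "ysg n ?w' = ysg n w" by (rule ysg_pair[OF p]) (use True in \<open>simp add: yf_def wp\<close>)
    have "inC n L ?w'"
    proof (rule Suc.IH)
      show "ysg n ?w' = -1" using \<open>ysg n ?w' = ysg n w\<close> Suc.prems(1) by simp
      show "\<forall>j. 1 \<le> j \<longrightarrow> j < k \<longrightarrow> ?w' j = PI" by (simp only: upd2_app) (use Suc.prems(2) in \<open>auto simp: p_def\<close>)
      show "?w' k = PY" by (simp only: upd2_app) (use Suc.prems(3) in \<open>auto simp: p_def\<close>)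
      show "\<forall>j. k < j \<longrightarrow> j < k + Suc e \<longrightarrow> ?w' j = PI" by (simp only: upd2_app) (use Suc.prems(4) in \<open>auto simp: p_def\<close>)
      show "k + Suc e \<le> n" using p unfolding p_def by simp
      show "?w' (k + Suc e) \<noteq> PI" unfolding p_def by simp
    qed
    hence "inC n L (?w'(p := w p, p + 1 := w (p + 1)))"
      by (rule C_mv[OF _ p]) (use True in \<open>simp add: wp MV_def\<close>)
    thus ?thesis by (simp only: upd_upd2 upd_self2 q)
  next
    case False
    have A: "w (p + 1) = PX \<or> w (p + 1) = PZ" using False wq by (cases "w (p + 1)") auto
    let ?w' = "w(p := PX, p + 1 := PI)"
    have "ysg n ?w' = ysg n w" by (rule ysg_pair[OF p]) (use A in \<open>auto simp: yf_def wp\<close>)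
    have "inC n L ?w'"
    proof (rule Suc.IH)
      show "ysg n ?w' = -1" using \<open>ysg n ?w' = ysg n w\<close> Suc.prems(1) by simp
      show "\<forall>j. 1 \<le> j \<longrightarrow> j < k \<longrightarrow> ?w' j = PI" by (simp only: upd2_app) (use Suc.prems(2) in \<open>auto simp: p_def\<close>)
      show "?w' k = PY" by (simp only: upd2_app) (use Suc.prems(3) in \<open>auto simp: p_def\<close>)
      show "\<forall>j. k < j \<longrightarrow> j < k + Suc e \<longrightarrow> ?w' j = PI" by (simp only: upd2_app) (use Suc.prems(4) in \<open>auto simp: p_def\<close>)
      show "k + Suc e \<le> n" using p unfolding p_def by simp
      show "?w' (k + Suc e) \<noteq> PI" unfolding p_def by simp
    qed
    hence "inC n L (?w'(p := PY, p + 1 := PY))"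
      by (rule C_mv[OF _ p]) (simp add: MV_def)
    hence "inC n L ((?w'(p := PY, p + 1 := PY))(p := w p, p + 1 := w (p + 1)))"
      by (rule C_mv[OF _ p]) (use A in \<open>auto simp: wp MV_def\<close>)
    thus ?thesis by (simp only: upd_upd2 upd_self2 q)
  qed
qed

lemma inner:
  assumes IH: "k < n \<Longrightarrow> Gk (k + 1)" and k: "1 \<le> k" "k \<le> n" and odd: "ysg n w = -1"
    and bef: "\<forall>j. 1 \<le> j \<longrightarrow> j < k \<longrightarrow> w j = PI" and wk: "w k = PY"
  shows "inC n L w"
proof (cases "\<exists>q. k < q \<and> q \<le> n \<and> w q \<noteq> PI")
  case False
  have all: "w j = PI" if j: "1 \<le> j" "j \<le> n" "j \<noteq> k" for j
  proof (cases "j < k")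
    case True thus ?thesis using bef j by blast
  next
    case jk: False
    hence "k < j" using j(3) by simp
    thus ?thesis using False j(2) by blast
  qed
  show ?thesis by (rule C_single[where w=w, OF k all wk])
next
  case True
  define q where "q = (LEAST q. k < q \<and> q \<le> n \<and> w q \<noteq> PI)"
  have q: "k < q \<and> q \<le> n \<and> w q \<noteq> PI" unfolding q_def by (rule LeastI_ex[OF True])
  have mid: "\<forall>j. k < j \<longrightarrow> j < q \<longrightarrow> w j = PI"
  proof (intro allI impI)
    fix j assume "k < j" "j < q"
    have "\<not> (k < j \<and> j \<le> n \<and> w j \<noteq> PI)" using \<open>j < q\<close> unfolding q_def by (rule not_less_Least)
    thus "w j = PI" using \<open>k < j\<close> \<open>j < q\<close> q by auto
  qed
  define e where "e = q - k - 1"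
  have e: "q = k + Suc e" unfolding e_def using q by arith
  have kn: "k < n" using q by auto
  show ?thesis
  proof (rule innerH[OF IH[OF kn] k(1) odd bef wk])
    show "\<forall>j. k < j \<longrightarrow> j < k + Suc e \<longrightarrow> w j = PI" using mid e by simp
    show "k + Suc e \<le> n" using q e by simp
    show "w (k + Suc e) \<noteq> PI" using q e by simp
  qed
qed

lemma step:
  assumes IH: "k < n \<Longrightarrow> Gk (k + 1)" and k: "1 \<le> k" "k \<le> n"
  shows "Gk k"
  unfolding Gk_def
proof (intro allI impI)
  fix w assume odd: "ysg n w = -1" and bef: "\<forall>j. 1 \<le> j \<longrightarrow> j < k \<longrightarrow> w j = PI"
  show "inC n L w"
  proof (cases "w k = PI")
    case True
    show ?thesis
    proof (cases "k < n")
      case True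
      have "\<forall>j. 1 \<le> j \<longrightarrow> j < k + 1 \<longrightarrow> w j = PI" using bef \<open>w k = PI\<close> by (auto simp: less_Suc_eq)
      thus ?thesis using IH[OF True] odd unfolding Gk_def by blast
    next
      case False
      hence "ysg n w = 1"
        by (intro ysg_allI) (use bef \<open>w k = PI\<close> k in \<open>auto simp: le_less\<close>)
      thus ?thesis using odd by simp
    qed
  next
    case wkI: False
    show ?thesis
    proof (cases "w k = PY")
      case True show ?thesis by (rule inner[OF IH k odd bef True])
    next
      case False
      hence A: "w k = PX \<or> w k = PZ" using wkI by (cases "w k") auto
      show ?thesis
      proof (cases "k < n")
        case False
        hence kn: "k = n" using k by simp
        have "ysg n w = yf (w k)"
          by (rule ysg_single[OF k]) (use bef kn in auto)
        thus ?thesis using A odd by (auto simp: yf_def)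
      next
        case True
        have k1: "1 \<le> k" "k < n" using k True by auto
        have G: "Gk (k + 1)" using IH True by simp
        have befk: "\<forall>j. 1 \<le> j \<longrightarrow> j < k + 1 \<longrightarrow> (w(k := PI, k + 1 := c)) j = PI" for c
          by (simp only: upd2_app) (use bef in auto)
        show ?thesis
        proof (cases "w (k + 1)")
          case PI
          let ?w' = "w(k := PI, k + 1 := PX)"
          have "ysg n ?w' = ysg n w" by (rule ysg_pair[OF k1]) (use A PI in \<open>auto simp: yf_def\<close>)
          hence y: "ysg n ?w' = -1" using odd by simp
          have "inC n L ?w'" by (rule GkD[OF G y befk])
          hence "inC n L (?w'(k := PY, k + 1 := PY))"
            by (rule C_mv[OF _ k1]) (simp add: MV_def)
          hence "inC n L ((?w'(k := PY, k + 1 := PY))(k := w k, k + 1 := w (k + 1)))"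
            by (rule C_mv[OF _ k1]) (use A PI in \<open>auto simp: MV_def\<close>)
          thus ?thesis by (simp only: upd_upd2 upd_self2)
        next
          case PY
          let ?w' = "w(k := PY, k + 1 := PI)"
          have y: "ysg n ?w' = ysg n w" by (rule ysg_pair[OF k1]) (use A PY in \<open>auto simp: yf_def\<close>)
          have b2: "\<forall>j. 1 \<le> j \<longrightarrow> j < k \<longrightarrow> ?w' j = PI"
            by (simp only: upd2_app) (use bef in auto)
          have b3: "?w' k = PY" by (simp only: upd2_app) simp
          have "inC n L ?w'"
            by (rule inner[OF IH k trans[OF y odd] b2 b3])
          hence "inC n L (?w'(k := w k, k + 1 := w (k + 1)))"
            by (rule C_mv[OF _ k1]) (use A PY in \<open>auto simp: MV_def\<close>)
          thus ?thesis by (simp only: upd_upd2 upd_self2)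
        next
          case PX
          let ?w' = "w(k := PI, k + 1 := PX)"
          have "ysg n ?w' = ysg n w" by (rule ysg_pair[OF k1]) (use A PX in \<open>auto simp: yf_def\<close>)
          hence y: "ysg n ?w' = -1" using odd by simp
          have "inC n L ?w'" by (rule GkD[OF G y befk])
          hence "inC n L (?w'(k := w k, k + 1 := w (k + 1)))"
            by (rule C_mv[OF _ k1]) (use A PX in \<open>auto simp: MV_def\<close>)
          thus ?thesis by (simp only: upd_upd2 upd_self2)
        next
          case PZ
          let ?w' = "w(k := PI, k + 1 := PX)"
          have "ysg n ?w' = ysg n w" by (rule ysg_pair[OF k1]) (use A PZ in \<open>auto simp: yf_def\<close>)
          hence y: "ysg n ?w' = -1" using odd by simp
          have "inC n L ?w'" by (rule GkD[OF G y befk])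
          hence "inC n L (?w'(k := w k, k + 1 := w (k + 1)))"
            by (rule C_mv[OF _ k1]) (use A PZ in \<open>auto simp: MV_def\<close>)
          thus ?thesis by (simp only: upd_upd2 upd_self2)
        qed
      qed
    qed
  qed
qed

lemma all_odd: "ysg n w = -1 \<Longrightarrow> inC n L w"
proof -
  have G: "Gk (n - i)" if "i < n" for i
    using that
  proof (induction i)
    case 0 show ?case by (rule step) (use n2 in auto)
  next
    case (Suc i)
    have e: "n - Suc i + 1 = n - i" using Suc.prems by simp
    show ?case by (rule step) (use Suc e in auto)
  qed
  have "Gk 1" using G[of "n - 1"] n2 by simp
  moreover assume "ysg n w = -1"
  ultimately show ?thesis unfolding Gk_def by simp
qed

end

definition asym :: "nat \<Rightarrow> complex mat \<Rightarrow> bool" where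
  "asym N g \<longleftrightarrow> (\<forall>i<N. \<forall>j<N. g $$ (i, j) \<in> \<real> \<and> g $$ (j, i) + g $$ (i, j) = 0)"

lemma asymD: "asym N g \<Longrightarrow> i < N \<Longrightarrow> j < N \<Longrightarrow> g $$ (i, j) \<in> \<real>"
  and asymD2: "asym N g \<Longrightarrow> i < N \<Longrightarrow> j < N \<Longrightarrow> g $$ (j, i) = - g $$ (i, j)"
  unfolding asym_def by (auto simp: eq_neg_iff_add_eq_0)

lemma asymI:
  assumes r: "\<And>i j. i < N \<Longrightarrow> j < N \<Longrightarrow> g $$ (i, j) \<in> \<real>"
    and s: "\<And>i j. i < N \<Longrightarrow> j < N \<Longrightarrow> g $$ (j, i) = - g $$ (i, j)"
  shows "asym N g"
  unfolding asym_def
proof (intro allI impI conjI)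
  fix i j assume ij: "i < N" "j < N"
  thus "g $$ (i, j) \<in> \<real>" by (rule r)
  from s[OF ij] show "g $$ (j, i) + g $$ (i, j) = 0" by simp
qed

lemma so_alg_iff: "g \<in> so_alg N \<longleftrightarrow> g \<in> carrier_mat N N \<and> asym N g"
proof
  assume g: "g \<in> so_alg N"
  hence c: "g \<in> carrier_mat N N" and r: "\<forall>i<N. \<forall>j<N. g $$ (i, j) \<in> \<real>" and t: "transpose_mat g = - g"
    unfolding so_alg_def by auto
  have s: "g $$ (j, i) = - g $$ (i, j)" if "i < N" "j < N" for i j
  proof -
    have "transpose_mat g $$ (i, j) = (- g) $$ (i, j)" using t by simp
    thus ?thesis using c that by simp
  qed
  have "asym N g" by (rule asymI[OF _ s]) (use r in blast)
  thus "g \<in> carrier_mat N N \<and> asym N g" using c by simp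
next
  assume h: "g \<in> carrier_mat N N \<and> asym N g"
  hence c: "g \<in> carrier_mat N N" and a: "asym N g" by auto
  have "transpose_mat g = - g"
  proof (rule eq_matI)
    fix i j assume "i < dim_row (- g)" "j < dim_col (- g)"
    hence ij: "i < N" "j < N" using c by auto
    thus "transpose_mat g $$ (i, j) = (- g) $$ (i, j)" using c asymD2[OF a ij(2) ij(1)] by simp
  qed (use c in auto)
  thus "g \<in> so_alg N" unfolding so_alg_def using c asymD[OF a] by blast
qed

lemma so_sub_u: "so_alg N \<subseteq> u_alg N"
proof
  fix g assume "g \<in> so_alg N"
  hence c: "g \<in> carrier_mat N N" and a: "asym N g"
    unfolding so_alg_iff by auto
  show "g \<in> u_alg N" unfolding u_alg_def
  proof (intro CollectI conjI allI impI)
    fix i j assume ij: "i < N" "j < N"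
    have "cnj (g $$ (j, i)) = g $$ (j, i)" using asymD[OF a ij(2) ij(1)] by (simp add: Reals_cnj_iff)
    thus "g $$ (i, j) = - cnj (g $$ (j, i))"
      using asymD2[OF a ij(2) ij(1)] by simp
  qed (use c in auto)
qed

lemma so_lie: "real_lie_subalgebra N (so_alg N)"
  unfolding real_lie_subalgebra_def
proof (intro conjI ballI allI)
  show "so_alg N \<subseteq> u_alg N" by (rule so_sub_u)
  have "asym N (0\<^sub>m N N)" by (rule asymI) simp_all
  thus "0\<^sub>m N N \<in> so_alg N" unfolding so_alg_iff by simp
next
  fix A B assume A: "A \<in> so_alg N" and B: "B \<in> so_alg N"
  hence cA: "A \<in> carrier_mat N N" and aA: "asym N A" and cB: "B \<in> carrier_mat N N" and aB: "asym N B"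
    unfolding so_alg_iff by auto
  have "asym N (A + B)"
  proof (rule asymI)
    fix i j assume ij: "i < N" "j < N"
    show "(A + B) $$ (i, j) \<in> \<real>" using cA cB ij asymD[OF aA ij] asymD[OF aB ij] by simp
    show "(A + B) $$ (j, i) = - (A + B) $$ (i, j)" using cA cB ij asymD2[OF aA ij] asymD2[OF aB ij] by simp
  qed
  thus "A + B \<in> so_alg N" unfolding so_alg_iff using cA cB by simp
  have prodR: "(A * B) $$ (i, j) \<in> \<real>" "(B * A) $$ (i, j) \<in> \<real>" if "i < N" "j < N" for i j
    using cA cB that by (auto simp: scalar_prod_def intro!: sum_in_Reals Reals_mult asymD[OF aA] asymD[OF aB])
  have sw: "(A * B) $$ (j, i) = (B * A) $$ (i, j)" if "i < N" "j < N" for i j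
  proof -
    have "(A * B) $$ (j, i) = (\<Sum>k = 0..<N. A $$ (j, k) * B $$ (k, i))" using cA cB that by (simp add: scalar_prod_def)
    also have "\<dots> = (\<Sum>k = 0..<N. B $$ (i, k) * A $$ (k, j))"
    proof (rule sum.cong[OF refl])
      fix k assume "k \<in> {0..<N}"
      hence k: "k < N" by simp
      show "A $$ (j, k) * B $$ (k, i) = B $$ (i, k) * A $$ (k, j)"
        using asymD2[OF aA k that(2)] asymD2[OF aB that(1) k] by simp
    qed
    also have "\<dots> = (B * A) $$ (i, j)" using cA cB that by (simp add: scalar_prod_def)
    finally show ?thesis .
  qed
  have cm: "commutator A B \<in> carrier_mat N N" unfolding commutator_def using cA cB by auto
  have "asym N (commutator A B)"
  proof (rule asymI)
    fix i j assume ij: "i < N" "j < N"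
    show "commutator A B $$ (i, j) \<in> \<real>" unfolding commutator_def
      using cA cB ij prodR[OF ij] by (simp add: Reals_diff)
    show "commutator A B $$ (j, i) = - commutator A B $$ (i, j)" unfolding commutator_def
      using cA cB ij sw[OF ij] sw[OF ij(2) ij(1)] by simp
  qed
  thus "commutator A B \<in> so_alg N" unfolding so_alg_iff using cm by simp
next
  fix A and c :: real assume A: "A \<in> so_alg N"
  hence cA: "A \<in> carrier_mat N N" and aA: "asym N A" unfolding so_alg_iff by auto
  have "asym N (of_real c \<cdot>\<^sub>m A)"
  proof (rule asymI)
    fix i j assume ij: "i < N" "j < N"
    show "(of_real c \<cdot>\<^sub>m A) $$ (i, j) \<in> \<real>" using cA ij asymD[OF aA ij] by simp
    show "(of_real c \<cdot>\<^sub>m A) $$ (j, i) = - (of_real c \<cdot>\<^sub>m A) $$ (i, j)" using cA ij asymD2[OF aA ij] by simp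
  qed
  thus "of_real c \<cdot>\<^sub>m A \<in> so_alg N" unfolding so_alg_iff using cA by simp
qed

lemma part2: "{g \<in> su_alg N. transpose_mat g = - g} = so_alg N"
proof
  show "{g \<in> su_alg N. transpose_mat g = - g} \<subseteq> so_alg N"
  proof
    fix g assume "g \<in> {g \<in> su_alg N. transpose_mat g = - g}"
    hence c: "g \<in> carrier_mat N N" and sk: "\<And>i j. i < N \<Longrightarrow> j < N \<Longrightarrow> g $$ (i, j) = - cnj (g $$ (j, i))"
      and t: "transpose_mat g = - g"
      unfolding su_alg_def u_alg_def by blast+
    have r: "g $$ (i, j) \<in> \<real>" if "i < N" "j < N" for i j
    proof -
      have "transpose_mat g $$ (i, j) = (- g) $$ (i, j)" using t by simp
      hence "g $$ (j, i) = - g $$ (i, j)" using c that by simp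
      thus ?thesis using sk[OF that] by (simp add: Reals_cnj_iff)
    qed
    show "g \<in> so_alg N" unfolding so_alg_def using c r t by auto
  qed
next
  show "so_alg N \<subseteq> {g \<in> su_alg N. transpose_mat g = - g}"
  proof
    fix g assume g: "g \<in> so_alg N"
    hence u: "g \<in> u_alg N" using so_sub_u by auto
    have c: "g \<in> carrier_mat N N" and a: "asym N g" using g unfolding so_alg_iff by auto
    have "g $$ (i, i) = 0" if "i < N" for i
      using asymD2[OF a that that] by simp
    hence "mtrace g = 0" unfolding mtrace_def using c by (auto intro!: sum.neutral)
    thus "g \<in> {g \<in> su_alg N. transpose_mat g = - g}"
      using g u unfolding su_alg_def so_alg_def by auto
  qed
qed

lemma UNIV_pauli: "(UNIV :: pauli set) = {PI, PX, PY, PZ}"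
  using pauli.exhaust by auto

lemma pe_swap: "a < 2 \<Longrightarrow> b < 2 \<Longrightarrow> pauli_entry p b a = of_int (yf p) * pauli_entry p a b"
  using lt2_cases[of a] lt2_cases[of b] by (cases p) (auto simp: yf_def)

lemma pe_cnj: "a < 2 \<Longrightarrow> b < 2 \<Longrightarrow> cnj (pauli_entry p a b) = of_int (yf p) * pauli_entry p a b"
  using lt2_cases[of a] lt2_cases[of b] by (cases p) (auto simp: yf_def)

lemma pe_orth:
  assumes "a < 2" "b < 2" "r < 2" "c < 2"
  shows "(\<Sum>x\<in>UNIV. cnj (pauli_entry x a b) * pauli_entry x r c) = (if a = r \<and> b = c then 2 else 0)"
  using lt2_cases[OF assms(1)] lt2_cases[OF assms(2)] lt2_cases[OF assms(3)] lt2_cases[OF assms(4)]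
  unfolding UNIV_pauli by auto

lemma pstr_swap:
  assumes "r < 2^n" "c < 2^n"
  shows "pauli_string n P $$ (c, r) = of_int (ysg n P) * pauli_string n P $$ (r, c)"
proof -
  have "pauli_string n P $$ (c, r) = (\<Prod>j\<in>{1..n}. pauli_entry (P j) (bitof c (n - j)) (bitof r (n - j)))"
    using assms unfolding pauli_string_def by simp
  also have "\<dots> = (\<Prod>j\<in>{1..n}. of_int (yf (P j)) * pauli_entry (P j) (bitof r (n - j)) (bitof c (n - j)))"
    by (rule prod.cong[OF refl], rule pe_swap) (simp_all add: bitof_lt2)
  also have "\<dots> = of_int (ysg n P) * pauli_string n P $$ (r, c)"
    using assms unfolding pauli_string_def ysg_def by (simp add: prod.distrib)
  finally show ?thesis .
qed

lemma pstr_cnj: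
  assumes "r < 2^n" "c < 2^n"
  shows "cnj (pauli_string n P $$ (r, c)) = of_int (ysg n P) * pauli_string n P $$ (r, c)"
proof -
  have "cnj (pauli_string n P $$ (r, c)) = (\<Prod>j\<in>{1..n}. cnj (pauli_entry (P j) (bitof r (n - j)) (bitof c (n - j))))"
    using assms unfolding pauli_string_def by simp
  also have "\<dots> = (\<Prod>j\<in>{1..n}. of_int (yf (P j)) * pauli_entry (P j) (bitof r (n - j)) (bitof c (n - j)))"
    by (rule prod.cong[OF refl], rule pe_cnj) (simp_all add: bitof_lt2)
  also have "\<dots> = of_int (ysg n P) * pauli_string n P $$ (r, c)"
    using assms unfolding pauli_string_def ysg_def by (simp add: prod.distrib)
  finally show ?thesis .
qed

lemma prod_pm: "finite A \<Longrightarrow> (\<forall>x\<in>A. f x \<in> {1, -1::int}) \<Longrightarrow> prod f A \<in> {1, -1}"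
  by (induction A rule: finite_induct) auto

lemma ysg_pm: "ysg n P = 1 \<or> ysg n P = -1"
  using prod_pm[of "{1..n}" "\<lambda>j. yf (P j)"] unfolding ysg_def by (auto simp: yf_def)

lemma bits_eq: "a < 2^n \<Longrightarrow> r < 2^n \<Longrightarrow> (\<forall>i<n. bitof a i = bitof r i) \<Longrightarrow> a = r"
proof (induction n arbitrary: a r)
  case 0 thus ?case by simp
next
  case (Suc n)
  have "a div 2 = r div 2"
  proof (rule Suc.IH)
    show "a div 2 < 2^n" "r div 2 < 2^n" using Suc.prems by auto
    show "\<forall>i<n. bitof (a div 2) i = bitof (r div 2) i"
    proof (intro allI impI)
      fix i assume "i < n"
      hence "bitof a (Suc i) = bitof r (Suc i)" using Suc.prems(3) by simp
      thus "bitof (a div 2) i = bitof (r div 2) i" by (simp add: bitof_def div_mult2_eq)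
    qed
  qed
  moreover have "a mod 2 = r mod 2" using Suc.prems(3)[rule_format, of 0] by (simp add: bitof_def)
  ultimately show ?case by (metis div_mult_mod_eq)
qed

lemma prod_if_const:
  assumes "finite A"
  shows "(\<Prod>j\<in>A. if Q j then (c::complex) else 0) = (if \<forall>j\<in>A. Q j then c ^ card A else 0)"
  using assms by (induction A rule: finite_induct) auto

lemma finite_pauli[simp]: "finite (UNIV :: pauli set)"
  unfolding UNIV_pauli by simp

lemma bits_all_iff:
  assumes "a < 2^n" "r < 2^n"
  shows "(\<forall>j\<in>{1..n}. bitof a (n - j) = bitof r (n - j)) \<longleftrightarrow> a = r"
proof
  assume h: "\<forall>j\<in>{1..n}. bitof a (n - j) = bitof r (n - j)"
  have "\<forall>i<n. bitof a i = bitof r i"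
  proof (intro allI impI)
    fix i assume "i < n"
    hence "n - i \<in> {1..n}" and "n - (n - i) = i" by auto
    thus "bitof a i = bitof r i" using h by metis
  qed
  thus "a = r" by (rule bits_eq[OF assms])
qed simp

lemma pstr_orth:
  assumes a: "a < 2^n" and b: "b < 2^n" and r: "r < 2^n" and c: "c < 2^n"
  shows "(\<Sum>P\<in>PiE {1..n} (\<lambda>_. UNIV). cnj (pauli_string n P $$ (a, b)) * pauli_string n P $$ (r, c))
    = (if a = r \<and> b = c then 2^n else 0)"
proof -
  define f where "f j x = cnj (pauli_entry x (bitof a (n - j)) (bitof b (n - j))) * pauli_entry x (bitof r (n - j)) (bitof c (n - j))" for j x
  have "(\<Sum>P\<in>PiE {1..n} (\<lambda>_. UNIV). cnj (pauli_string n P $$ (a, b)) * pauli_string n P $$ (r, c))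
      = (\<Sum>P\<in>PiE {1..n} (\<lambda>_. UNIV). \<Prod>j\<in>{1..n}. f j (P j))"
    by (rule sum.cong[OF refl]) (use a b r c in \<open>simp add: pauli_string_def f_def prod.distrib\<close>)
  also have "\<dots> = (\<Prod>j\<in>{1..n}. \<Sum>x\<in>UNIV. f j x)"
    by (rule prod_sum_PiE[symmetric]) auto
  also have "\<dots> = (\<Prod>j\<in>{1..n}. if bitof a (n - j) = bitof r (n - j) \<and> bitof b (n - j) = bitof c (n - j) then 2 else 0)"
    by (rule prod.cong[OF refl]) (unfold f_def, rule pe_orth, simp_all add: bitof_lt2)
  also have "\<dots> = (if \<forall>j\<in>{1..n}. bitof a (n - j) = bitof r (n - j) \<and> bitof b (n - j) = bitof c (n - j) then 2 ^ n else 0)"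
    by (subst prod_if_const) simp_all
  also have "(\<forall>j\<in>{1..n}. bitof a (n - j) = bitof r (n - j) \<and> bitof b (n - j) = bitof c (n - j)) \<longleftrightarrow> a = r \<and> b = c"
    using bits_all_iff[OF a r] bits_all_iff[OF b c] by blast
  finally show ?thesis .
qed

definition coef :: "nat \<Rightarrow> complex mat \<Rightarrow> (nat \<Rightarrow> pauli) \<Rightarrow> complex" where
  "coef n M P = (\<Sum>a<2^n. \<Sum>b<2^n. cnj (pauli_string n P $$ (a, b)) * M $$ (a, b)) / 2^n"

abbreviation W :: "nat \<Rightarrow> (nat \<Rightarrow> pauli) set" where
  "W n \<equiv> PiE {1..n} (\<lambda>_. UNIV)"

lemma finite_W: "finite (W n)"
  by (rule finite_PiE) auto

lemma expansion:
  assumes r: "r < 2^n" and c: "c < 2^n"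
  shows "M $$ (r, c) = (\<Sum>P\<in>W n. coef n M P * pauli_string n P $$ (r, c))"
proof -
  let ?N = "(2::complex)^n"
  have "(\<Sum>P\<in>W n. coef n M P * pauli_string n P $$ (r, c))
    = (\<Sum>P\<in>W n. \<Sum>a<2^n. \<Sum>b<2^n. M $$ (a, b) / ?N * (cnj (pauli_string n P $$ (a, b)) * pauli_string n P $$ (r, c)))"
  proof (rule sum.cong[OF refl])
    fix P
    have "coef n M P * pauli_string n P $$ (r, c)
      = (\<Sum>a<2^n. \<Sum>b<2^n. cnj (pauli_string n P $$ (a, b)) * M $$ (a, b) / ?N * pauli_string n P $$ (r, c))"
      unfolding coef_def by (simp only: sum_divide_distrib sum_distrib_right)
    also have "\<dots> = (\<Sum>a<2^n. \<Sum>b<2^n. M $$ (a, b) / ?N * (cnj (pauli_string n P $$ (a, b)) * pauli_string n P $$ (r, c)))"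
      by (intro sum.cong refl) (simp add: field_simps)
    finally show "coef n M P * pauli_string n P $$ (r, c) = \<dots>" .
  qed
  also have "\<dots> = (\<Sum>a<2^n. \<Sum>P\<in>W n. \<Sum>b<2^n. M $$ (a, b) / ?N * (cnj (pauli_string n P $$ (a, b)) * pauli_string n P $$ (r, c)))"
    by (rule sum.swap)
  also have "\<dots> = (\<Sum>a<2^n. \<Sum>b<2^n. \<Sum>P\<in>W n. M $$ (a, b) / ?N * (cnj (pauli_string n P $$ (a, b)) * pauli_string n P $$ (r, c)))"
    by (rule sum.cong[OF refl], rule sum.swap)
  also have "\<dots> = (\<Sum>a<2^n. \<Sum>b<2^n. M $$ (a, b) / ?N * (if a = r \<and> b = c then ?N else 0))"
  proof (intro sum.cong refl)
    fix a b :: nat assume "a \<in> {..<2^n}" "b \<in> {..<2^n}"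
    hence a: "a < 2^n" and b: "b < 2^n" by auto
    show "(\<Sum>P\<in>W n. M $$ (a, b) / ?N * (cnj (pauli_string n P $$ (a, b)) * pauli_string n P $$ (r, c)))
      = M $$ (a, b) / ?N * (if a = r \<and> b = c then ?N else 0)"
      by (simp only: sum_distrib_left[symmetric] pstr_orth[OF a b r c])
  qed
  also have "\<dots> = (\<Sum>a<2^n. if a = r then M $$ (a, c) else 0)"
    by (intro sum.cong refl) (use c in \<open>auto simp: if_distrib cong: if_cong\<close>)
  also have "\<dots> = M $$ (r, c)" using r by simp
  finally show ?thesis by simp
qed

lemma term_eq:
  assumes e: "e = 1 \<or> e = -1"
  shows "(c * X + - (c * e * X) + cnj c * e * X + - (cnj c * X)) / 4 = (if e = -1 then complex_of_real (Im c) * (\<i> * X) else 0)"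
proof (cases "e = 1")
  case True thus ?thesis by simp
next
  case False
  hence e1: "e = -1" using e by simp
  have d: "c - cnj c = complex_of_real (2 * Im c) * \<i>" by (rule complex_diff_cnj)
  have "(c * X + - (c * e * X) + cnj c * e * X + - (cnj c * X)) / 4 = (c - cnj c) * X / 2"
    unfolding e1 by (simp add: field_simps)
  also have "\<dots> = complex_of_real (Im c) * (\<i> * X)" unfolding d by simp
  finally show ?thesis using e1 by simp
qed

lemma e_pm: "complex_of_int (ysg n P) = 1 \<or> complex_of_int (ysg n P) = -1"
  using ysg_pm[of n P] by auto

lemma so_decomp:
  assumes g: "g \<in> so_alg (2^n)" and r: "r < 2^n" and c: "c < 2^n"
  shows "g $$ (r, c) = (\<Sum>P\<in>{P \<in> W n. ysg n P = -1}. complex_of_real (Im (coef n g P)) * (\<i> * pauli_string n P $$ (r, c)))"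
proof -
  have cg: "g \<in> carrier_mat (2^n) (2^n)" and a: "asym (2^n) g" using g unfolding so_alg_iff by auto
  let ?c = "\<lambda>P. coef n g P" and ?X = "\<lambda>P. pauli_string n P $$ (r, c)" and ?e = "\<lambda>P. complex_of_int (ysg n P)"
  have S1: "g $$ (r, c) = (\<Sum>P\<in>W n. ?c P * ?X P)" by (rule expansion[OF r c])
  have gcr: "g $$ (c, r) = (\<Sum>P\<in>W n. ?c P * (?e P * ?X P))"
    unfolding expansion[OF c r, of g] by (simp add: pstr_swap[OF r c])
  have S2: "g $$ (r, c) = (\<Sum>P\<in>W n. - (?c P * ?e P * ?X P))"
  proof -
    have "g $$ (c, r) = - g $$ (r, c)" by (rule asymD2[OF a r c])
    hence "g $$ (r, c) = - g $$ (c, r)" by simp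
    also have "\<dots> = (\<Sum>P\<in>W n. - (?c P * ?e P * ?X P))" unfolding gcr by (simp add: sum_negf algebra_simps)
    finally show ?thesis .
  qed
  have real: "cnj (g $$ (i, j)) = g $$ (i, j)" if "i < 2^n" "j < 2^n" for i j
    using asymD[OF a that] by (simp add: Reals_cnj_iff)
  have S3: "g $$ (r, c) = (\<Sum>P\<in>W n. cnj (?c P) * ?e P * ?X P)"
  proof -
    have "g $$ (r, c) = cnj (g $$ (r, c))" using real[OF r c] by simp
    also have "\<dots> = (\<Sum>P\<in>W n. cnj (?c P) * ?e P * ?X P)" unfolding S1 by (simp add: pstr_cnj[OF r c] mult.assoc)
    finally show ?thesis .
  qed
  have S4: "g $$ (r, c) = (\<Sum>P\<in>W n. - (cnj (?c P) * ?X P))"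
  proof -
    have ee: "?e P * ?e P = 1" for P using ysg_pm[of n P] by auto
    have "g $$ (r, c) = - cnj (g $$ (c, r))" using real[OF c r] asymD2[OF a r c] by simp
    also have "\<dots> = (\<Sum>P\<in>W n. - (cnj (?c P) * (?e P * ?e P) * ?X P))"
      unfolding gcr by (simp add: pstr_cnj[OF r c] sum_negf algebra_simps)
    also have "\<dots> = (\<Sum>P\<in>W n. - (cnj (?c P) * ?X P))" by (simp only: ee mult_1_right)
    finally show ?thesis .
  qed
  have "g $$ (r, c) = ((\<Sum>P\<in>W n. ?c P * ?X P) + (\<Sum>P\<in>W n. - (?c P * ?e P * ?X P))
      + (\<Sum>P\<in>W n. cnj (?c P) * ?e P * ?X P) + (\<Sum>P\<in>W n. - (cnj (?c P) * ?X P))) / 4"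
    unfolding S1[symmetric] S2[symmetric] S3[symmetric] S4[symmetric] by simp
  also have "\<dots> = (\<Sum>P\<in>W n. (?c P * ?X P + - (?c P * ?e P * ?X P) + cnj (?c P) * ?e P * ?X P + - (cnj (?c P) * ?X P)) / 4)"
    by (simp only: sum_divide_distrib[symmetric] sum.distrib)
  also have "\<dots> = (\<Sum>P\<in>W n. if ?e P = -1 then complex_of_real (Im (?c P)) * (\<i> * ?X P) else 0)"
    by (rule sum.cong[OF refl], rule term_eq, rule e_pm)
  also have "\<dots> = (\<Sum>P\<in>W n. if ysg n P = -1 then complex_of_real (Im (?c P)) * (\<i> * ?X P) else 0)"
    by (rule sum.cong[OF refl]) (simp add: of_int_eq_iff[symmetric, where 'a=complex])
  also have "\<dots> = (\<Sum>P\<in>{P \<in> W n. ysg n P = -1}. complex_of_real (Im (?c P)) * (\<i> * ?X P))"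
    by (rule sum.inter_filter[symmetric, OF finite_W])
  finally show ?thesis .
qed

lemma mat_sum_in:
  assumes L: "real_lie_subalgebra N L" and fin: "finite S"
    and A: "\<And>s. s \<in> S \<Longrightarrow> A s \<in> L" and Ac: "\<And>s. s \<in> S \<Longrightarrow> A s \<in> carrier_mat N N"
  shows "mat N N (\<lambda>rc. \<Sum>s\<in>S. A s $$ rc) \<in> L"
  using fin A Ac
proof (induction S rule: finite_induct)
  case empty
  have eq: "mat N N (\<lambda>rc. \<Sum>s\<in>{}. A s $$ rc) = 0\<^sub>m N N" by (rule eq_matI) auto
  show ?case unfolding eq by (rule rls_zero[OF L])
next
  case (insert x F)
  have "mat N N (\<lambda>rc. \<Sum>s\<in>insert x F. A s $$ rc) = A x + mat N N (\<lambda>rc. \<Sum>s\<in>F. A s $$ rc)"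
  proof (rule eq_matI)
    fix i j assume "i < dim_row (A x + mat N N (\<lambda>rc. \<Sum>s\<in>F. A s $$ rc))" "j < dim_col (A x + mat N N (\<lambda>rc. \<Sum>s\<in>F. A s $$ rc))"
    hence "i < N" "j < N" by auto
    thus "mat N N (\<lambda>rc. \<Sum>s\<in>insert x F. A s $$ rc) $$ (i, j) = (A x + mat N N (\<lambda>rc. \<Sum>s\<in>F. A s $$ rc)) $$ (i, j)"
      using insert by simp
  qed (use insert in auto)
  moreover have "mat N N (\<lambda>rc. \<Sum>s\<in>F. A s $$ rc) \<in> L" using insert by simp
  ultimately show ?case using rls_add[OF L] insert by simp
qed

lemma so_sub_L:
  assumes L: "real_lie_subalgebra (2^n) L"
    and gens: "\<And>j a b. 1 \<le> j \<Longrightarrow> j < n \<Longrightarrow> (a, b) \<in> {(PX,PY),(PY,PX),(PY,PZ),(PZ,PY)}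
                 \<Longrightarrow> \<i> \<cdot>\<^sub>m pauli_string n (tw j a b) \<in> L"
    and n2: "2 \<le> n"
  shows "so_alg (2^n) \<subseteq> L"
proof
  fix g assume g: "g \<in> so_alg (2^n)"
  let ?O = "{P \<in> W n. ysg n P = -1}"
  define A where "A P = complex_of_real (Im (coef n g P)) \<cdot>\<^sub>m (\<i> \<cdot>\<^sub>m pauli_string n P)" for P
  have fin: "finite ?O" using finite_W by simp
  have AL: "A P \<in> L" if "P \<in> ?O" for P
  proof -
    have o: "ysg n P = -1" using that by simp
    have "inC n L P" by (rule all_odd[OF L gens n2 o])
    thus ?thesis unfolding A_def inC_def by (rule rls_smult[OF L])
  qed
  have Ac: "A P \<in> carrier_mat (2^n) (2^n)" for P unfolding A_def by simp
  have "g = mat (2^n) (2^n) (\<lambda>rc. \<Sum>P\<in>?O. A P $$ rc)"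
  proof (rule eq_matI)
    fix r c assume "r < dim_row (mat (2^n) (2^n) (\<lambda>rc. \<Sum>P\<in>?O. A P $$ rc))"
      "c < dim_col (mat (2^n) (2^n) (\<lambda>rc. \<Sum>P\<in>?O. A P $$ rc))"
    hence r: "r < 2^n" and c: "c < 2^n" by auto
    show "g $$ (r, c) = mat (2^n) (2^n) (\<lambda>rc. \<Sum>P\<in>?O. A P $$ rc) $$ (r, c)"
      using r c by (simp add: so_decomp[OF g r c] A_def)
  qed (use g in \<open>auto simp: so_alg_def\<close>)
  also have "\<dots> \<in> L" by (rule mat_sum_in[OF L fin AL Ac])
  finally show "g \<in> L" .
qed

lemma odd_in_so:
  assumes "ysg n P = -1"
  shows "\<i> \<cdot>\<^sub>m pauli_string n P \<in> so_alg (2^n)"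
proof -
  have "asym (2^n) (\<i> \<cdot>\<^sub>m pauli_string n P)"
  proof (rule asymI)
    fix i j :: nat assume ij: "i < 2^n" "j < 2^n"
    have "cnj (\<i> * pauli_string n P $$ (i, j)) = \<i> * pauli_string n P $$ (i, j)"
      using pstr_cnj[OF ij, of P] assms by simp
    thus "(\<i> \<cdot>\<^sub>m pauli_string n P) $$ (i, j) \<in> \<real>" using ij by (simp add: Reals_cnj_iff)
    show "(\<i> \<cdot>\<^sub>m pauli_string n P) $$ (j, i) = - (\<i> \<cdot>\<^sub>m pauli_string n P) $$ (i, j)"
      using ij pstr_swap[OF ij, of P] assms by simp
  qed
  thus ?thesis unfolding so_alg_iff by simp
qed

lemma ysg_tw: "1 \<le> j \<Longrightarrow> j < n \<Longrightarrow> ysg n (tw j a b) = yf a * yf b"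
  unfolding ysg_def by (subst prod_two[of j n]) (auto simp: tw_def yf_def)

lemma two_site_tw: "two_site n j a b = pauli_string n (tw j a b)"
  unfolding two_site_def tw_def by simp

lemma a16_eq:
  assumes n2: "2 \<le> n"
  shows "a16 n = so_alg (2^n)"
proof -
  let ?S = "(\<Union>j\<in>{1..n-1}. {two_site n j PX PY, two_site n j PY PX, two_site n j PY PZ, two_site n j PZ PY})"
  have "a16 n = \<Inter>{L. real_lie_subalgebra (2^n) L \<and> (\<forall>P\<in>?S. \<i> \<cdot>\<^sub>m P \<in> L)}"
    unfolding a16_def lie_gen_def by simp
  also have "\<dots> = so_alg (2^n)"
  proof
    have "so_alg (2^n) \<in> {L. real_lie_subalgebra (2^n) L \<and> (\<forall>P\<in>?S. \<i> \<cdot>\<^sub>m P \<in> L)}"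
    proof (intro CollectI conjI ballI)
      show "real_lie_subalgebra (2^n) (so_alg (2^n))" by (rule so_lie)
      fix P assume "P \<in> ?S"
      then obtain j where j: "1 \<le> j" "j < n" and P: "P \<in> {two_site n j PX PY, two_site n j PY PX, two_site n j PY PZ, two_site n j PZ PY}"
        by auto
      show "\<i> \<cdot>\<^sub>m P \<in> so_alg (2^n)"
        using P by (auto simp: two_site_tw intro!: odd_in_so simp: ysg_tw[OF j] yf_def)
    qed
    thus "\<Inter>{L. real_lie_subalgebra (2^n) L \<and> (\<forall>P\<in>?S. \<i> \<cdot>\<^sub>m P \<in> L)} \<subseteq> so_alg (2^n)"
      by (rule Inter_lower)
  next
    show "so_alg (2^n) \<subseteq> \<Inter>{L. real_lie_subalgebra (2^n) L \<and> (\<forall>P\<in>?S. \<i> \<cdot>\<^sub>m P \<in> L)}"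
    proof (rule Inter_greatest)
      fix L assume "L \<in> {L. real_lie_subalgebra (2^n) L \<and> (\<forall>P\<in>?S. \<i> \<cdot>\<^sub>m P \<in> L)}"
      hence L: "real_lie_subalgebra (2^n) L" and SL: "\<forall>P\<in>?S. \<i> \<cdot>\<^sub>m P \<in> L" by auto
      have gens: "\<i> \<cdot>\<^sub>m pauli_string n (tw j a b) \<in> L"
        if "1 \<le> j" "j < n" "(a, b) \<in> {(PX,PY),(PY,PX),(PY,PZ),(PZ,PY)}" for j a b
      proof -
        have "two_site n j a b \<in> ?S" using that by auto
        hence "\<i> \<cdot>\<^sub>m two_site n j a b \<in> L" using SL by blast
        thus ?thesis by (simp only: two_site_tw)
      qed
      show "so_alg (2^n) \<subseteq> L" by (rule so_sub_L[OF L gens n2])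
    qed
  qed
  finally show ?thesis .
qed

theorem mainTheorem18:
  fixes n :: nat
  assumes "n \<ge> 3"
  shows "a16 n = {g \<in> su_alg (2 ^ n). transpose_mat g = - g}
       \<and> {g \<in> su_alg (2 ^ n). transpose_mat g = - g} = so_alg (2 ^ n)"
  using a16_eq[of n] part2[of "2^n"] assms by simp


end
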